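(* Let $K$ be an admissible kernel on $X\times Y$ and let $C_K\in\mathbb{R}$ be its constant, i.e. $\int_X K(x,y)\,dm_X(x)=C_K$ for all $y\in Y$. Let $\mu$ be a Borel probability measure on $Y$ and $c\in\mathbb{R}$, and suppose that $U_K^\mu(x)=c$ for all $x\in X$. Then $c=C_K$.
   Context: $(X,d_X)$ and $(Y,d_Y)$ are compact metric spaces and $G$ is a compact topological group acting isometrically and transitively on both $X$ and $Y$. $m_X$ and $m_Y$ denote the unique $G$-invariant Radon (Borel) probability measures on $X$ and $Y$. A Borel measurable $K:X\times Y\to\mathbb{R}\cup\{-\infty\}$ is an admissible kernel if: (i) there is $B_K\in[0,\infty)$ with $-\infty\le K(x,y)\le B_K$ for all $x,y$; (ii) $\int_X|K(x,y)|\,dm_X(x)<\infty$ for every $y\in Y$; (iii) for every $y$, $K(\cdot,y)$ is upper semi-continuous; (iv) $K(g(x),y)=K(x,g^{-1}(y))$ for all $g\in G,x\in X,y\in Y$. For an admissible kernel the integral $\int_X K(x,y)\,dm_X(x)$ is independent of $y$; this common value is the constant $C_K$. For a Borel probability measure $\mu$ on $Y$, the potential function is $U_K^\mu(x)=\int_Y K(x,y)\,d\mu(y)$, $x\in X$. *)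

theory Defs
  imports "HOL-Probability.Probability"
begin

definition usc :: "('a::topological_space \<Rightarrow> ereal) \<Rightarrow> bool" where
  "usc f \<longleftrightarrow> (\<forall>x t. f x < t \<longrightarrow> (\<forall>\<^sub>F z in at x. f z < t))"

definition ereal_integral :: "'a measure \<Rightarrow> ('a \<Rightarrow> ereal) \<Rightarrow> ereal" where
  "ereal_integral M f =
     enn2ereal (\<integral>\<^sup>+ x. e2ennreal (f x) \<partial>M) - enn2ereal (\<integral>\<^sup>+ x. e2ennreal (- f x) \<partial>M)"

definition isom_trans_action :: "('g::topological_group_add \<Rightarrow> 'x::metric_space \<Rightarrow> 'x) \<Rightarrow> bool" where
  "isom_trans_action act \<longleftrightarrow>
     (\<forall>x. act 0 x = x) \<and> (\<forall>g h x. act (g + h) x = act g (act h x)) \<and>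
     continuous_on UNIV (\<lambda>(g, x). act g x) \<and>
     (\<forall>g x x'. dist (act g x) (act g x') = dist x x') \<and>
     (\<forall>x x'. \<exists>g. act g x = x')"

definition invariant_prob :: "('g \<Rightarrow> 'x::topological_space \<Rightarrow> 'x) \<Rightarrow> 'x measure \<Rightarrow> bool" where
  "invariant_prob act m \<longleftrightarrow> prob_space m \<and> sets m = sets borel \<and>
     (\<forall>g A. A \<in> sets borel \<longrightarrow> emeasure m ((act g) -` A) = emeasure m A)"

definition admissible_kernel ::
  "('g::group_add \<Rightarrow> 'x::topological_space \<Rightarrow> 'x) \<Rightarrow> ('g \<Rightarrow> 'y::topological_space \<Rightarrow> 'y)
   \<Rightarrow> 'x measure \<Rightarrow> ('x \<Rightarrow> 'y \<Rightarrow> ereal) \<Rightarrow> bool" where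
  "admissible_kernel actX actY mX K \<longleftrightarrow>
     (\<lambda>(x, y). K x y) \<in> borel_measurable borel \<and>
     (\<exists>B::real. B \<ge> 0 \<and> (\<forall>x y. K x y \<le> ereal B)) \<and>
     (\<forall>y. (\<integral>\<^sup>+ x. e2ennreal \<bar>K x y\<bar> \<partial>mX) < \<infinity>) \<and>
     (\<forall>y. usc (\<lambda>x. K x y)) \<and>
     (\<forall>g x y. K (actX g x) y = K x (actY (- g) y))"

end

theory Submission
  imports Defs
begin


lemma cbase:
  assumes "compact (UNIV::'a::metric_space set)"
  shows "\<exists>B::'a set set. countable B \<and> (\<forall>b\<in>B. open b) \<and> (\<forall>U x. open U \<and> x\<in>U \<longrightarrow> (\<exists>b\<in>B. x\<in>b \<and> b \<subseteq> U))"
proof -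
  have tb: "\<forall>\<epsilon>>0. \<exists>k. finite k \<and> (UNIV::'a set) \<subseteq> (\<Union>x\<in>k. ball x \<epsilon>)"
    using conjunct2[OF iffD1[OF compact_eq_totally_bounded assms]] .
  have "\<forall>n::nat. \<exists>k. finite k \<and> (UNIV::'a set) \<subseteq> (\<Union>x\<in>k. ball x (1/Suc n))"
  proof
    fix n :: nat
    have "(0::real) < 1/Suc n" by simp
    then show "\<exists>k. finite k \<and> (UNIV::'a set) \<subseteq> (\<Union>x\<in>k. ball x (1/Suc n))" by (rule tb[rule_format])
  qed
  then have "\<exists>k. \<forall>n::nat. finite (k n) \<and> (UNIV::'a set) \<subseteq> (\<Union>x\<in>k n. ball x (1/Suc n))"
    by (rule choice)
  then obtain k where k: "\<And>n. finite (k n)" "\<And>n. (UNIV::'a set) \<subseteq> (\<Union>x\<in>k n. ball x (1/Suc n))"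
    by blast
  define B where "B = (\<Union>n. (\<lambda>c. ball c (1/Suc n)) ` k n)"
  have "countable B" unfolding B_def by (intro countable_UN countable_image) (auto intro: countable_finite k(1))
  moreover have "\<forall>b\<in>B. open b" unfolding B_def by auto
  moreover have "\<forall>U x. open U \<and> x\<in>U \<longrightarrow> (\<exists>b\<in>B. x\<in>b \<and> b \<subseteq> U)"
  proof (intro allI impI)
    fix U and x :: 'a assume U': "open U \<and> x \<in> U"
    then have U: "open U" "x \<in> U" by auto
    obtain e where e: "e > 0" "ball x e \<subseteq> U" using open_contains_ball[THEN iffD1, OF U(1)] U(2) by blast
    have "0 < e/2" using e(1) by simp
    then obtain n::nat where n: "1 / real (Suc n) < e/2" by (rule nat_approx_posE)
    have "x \<in> (\<Union>c\<in>k n. ball c (1/Suc n))" using k(2)[of n] by blast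
    then obtain c where c: "c \<in> k n" "x \<in> ball c (1/Suc n)" by blast
    have "ball c (1/Suc n) \<subseteq> ball x e"
    proof
      fix y assume "y \<in> ball c (1/Suc n)"
      then have h1: "dist c y < 1/Suc n" by simp
      have h2: "dist x c < 1/Suc n" using c(2) by (simp add: dist_commute)
      have h3: "dist x y \<le> dist x c + dist c y" by (rule dist_triangle)
      have "dist x y < e" using h1 h2 h3 n by linarith
      then show "y \<in> ball x e" by simp
    qed
    moreover have "ball c (1/Suc n) \<in> B" unfolding B_def using c(1) by blast
    ultimately show "\<exists>b\<in>B. x\<in>b \<and> b \<subseteq> U" using c(2) e(2) by blast
  qed
  ultimately have "countable B \<and> (\<forall>b\<in>B. open b) \<and> (\<forall>U x. open U \<and> x\<in>U \<longrightarrow> (\<exists>b\<in>B. x\<in>b \<and> b \<subseteq> U))"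
    by (intro conjI)
  then show ?thesis by (rule exI)
qed

lemma borel_sub:
  assumes "compact (UNIV::'a::metric_space set)" "compact (UNIV::'b::metric_space set)"
  shows "sets (borel :: ('a \<times> 'b) measure) \<subseteq> sets (borel \<Otimes>\<^sub>M borel :: ('a \<times> 'b) measure)"
proof -
  obtain BX :: "'a set set" where BX: "countable BX" "\<forall>b\<in>BX. open b"
      "\<forall>U x. open U \<and> x\<in>U \<longrightarrow> (\<exists>b\<in>BX. x\<in>b \<and> b \<subseteq> U)" using cbase[OF assms(1)] by blast
  obtain BY :: "'b set set" where BY: "countable BY" "\<forall>b\<in>BY. open b"
      "\<forall>U x. open U \<and> x\<in>U \<longrightarrow> (\<exists>b\<in>BY. x\<in>b \<and> b \<subseteq> U)" using cbase[OF assms(2)] by blast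
  have "W \<in> sets (borel \<Otimes>\<^sub>M borel :: ('a \<times> 'b) measure)" if W: "open W" for W :: "('a\<times>'b) set"
  proof -
    let ?C = "{p. p \<in> (\<lambda>(a,b). a \<times> b) ` (BX \<times> BY) \<and> p \<subseteq> W}"
    have eq: "W = \<Union>?C"
    proof
      show "W \<subseteq> \<Union>?C"
      proof
        fix z assume "z \<in> W"
        then obtain A B where AB: "open A" "open B" "z \<in> A \<times> B" "A \<times> B \<subseteq> W"
          using open_prod_elim[OF W \<open>z \<in> W\<close>] by metis
        have "fst z \<in> A" "snd z \<in> B" using AB(3) by (auto simp: mem_Times_iff)
        obtain a where a: "a \<in> BX" "fst z \<in> a" "a \<subseteq> A" using BX(3)[rule_format, OF conjI[OF AB(1) \<open>fst z \<in> A\<close>]] by blast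
        obtain b where b: "b \<in> BY" "snd z \<in> b" "b \<subseteq> B" using BY(3)[rule_format, OF conjI[OF AB(2) \<open>snd z \<in> B\<close>]] by blast
        have "a \<times> b \<subseteq> W" using a(3) b(3) AB(4) by blast
        then have "a \<times> b \<in> ?C" using a(1) b(1) by (intro CollectI conjI image_eqI[of _ _ "(a,b)"]) auto
        moreover have "z \<in> a \<times> b" using a b by (simp add: mem_Times_iff)
        ultimately show "z \<in> \<Union>?C" by blast
      qed
    qed blast
    have "countable ?C"
      by (rule countable_subset[of _ "(\<lambda>(a,b). a \<times> b) ` (BX \<times> BY)"]) (use BX BY in auto)
    moreover have "?C \<subseteq> sets (borel \<Otimes>\<^sub>M borel)"
      using BX(2) BY(2) by (auto intro!: pair_measureI)
    ultimately show ?thesis by (subst eq) (rule sets.countable_Union)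
  qed
  then show ?thesis unfolding sets_borel
    by (intro sets.sigma_sets_subset') auto
qed



lemma key:
  assumes M: "prob_space M" and fm: "f \<in> borel_measurable M" and gm: "g \<in> borel_measurable M"
    and fb: "\<And>z. f z \<le> ennreal B"
    and d: "\<And>z. enn2ereal (f z) - enn2ereal (g z) = ereal C"
  shows "enn2ereal (\<integral>\<^sup>+z. f z \<partial>M) - enn2ereal (\<integral>\<^sup>+z. g z \<partial>M) = ereal C"
proof -
  interpret prob_space M by (rule M)
  define a where "a z = enn2real (f z)" for z
  define b where "b z = enn2real (g z)" for z
  have ffin: "f z < top" for z using fb[of z] by (simp add: order_le_less_trans)
  have fa: "f z = ennreal (a z)" for z unfolding a_def using ffin[of z] by simp
  have a00: "a z \<ge> 0" for z unfolding a_def by auto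
  have gfin: "g z < top" for z
  proof (rule ccontr)
    assume "\<not> g z < top"
    then have "g z = top" using top.not_eq_extremum by blast
    then show False using d[of z] fa[of z] a00[of z] by simp
  qed
  have gb: "g z = ennreal (b z)" for z unfolding b_def using gfin[of z] by simp
  have a0: "a z \<ge> 0" "b z \<ge> 0" for z unfolding a_def b_def by auto
  have ab: "a z - b z = C" for z
    using d[of z] a0[of z] unfolding fa gb by simp
  have aB: "a z \<le> max B 0" for z
    using fb[of z] a0[of z] unfolding fa
    by (metis ennreal_le_iff2 max.cobounded1 max.cobounded2 order.trans ennreal_leI ennreal_le_iff)
  have am: "a \<in> borel_measurable M" unfolding a_def using fm by measurable
  have bm: "b \<in> borel_measurable M" unfolding b_def using gm by measurable
  have ia: "integrable M a"
    by (rule integrable_const_bound[where B="max B 0"]) (use aB a0 am in auto)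
  have bB: "b z = a z - C" for z using ab[of z] by simp
  have ib: "integrable M b"
  proof (rule integrable_const_bound[where B="max B 0 + \<bar>C\<bar>"])
    have "norm (b z) \<le> max B 0 + \<bar>C\<bar>" for z
    proof -
      have "b z \<le> max B 0 + \<bar>C\<bar>" using aB[of z] bB[of z] by linarith
      then show ?thesis using a0(2)[of z] by simp
    qed
    then show "AE x in M. norm (b x) \<le> max B 0 + \<bar>C\<bar>" by simp
  qed (rule bm)
  have "(\<integral>\<^sup>+z. f z \<partial>M) = ennreal (integral\<^sup>L M a)"
    unfolding fa by (rule nn_integral_eq_integral[OF ia]) (use a0 in auto)
  moreover have "(\<integral>\<^sup>+z. g z \<partial>M) = ennreal (integral\<^sup>L M b)"
    unfolding gb by (rule nn_integral_eq_integral[OF ib]) (use a0 in auto)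
  moreover have "integral\<^sup>L M a \<ge> 0" "integral\<^sup>L M b \<ge> 0" using a0 by auto
  moreover have "integral\<^sup>L M a - integral\<^sup>L M b = C"
  proof -
    have "integral\<^sup>L M a - integral\<^sup>L M b = integral\<^sup>L M (\<lambda>z. a z - b z)"
      using ia ib by simp
    also have "\<dots> = C" using ab prob_space by simp
    finally show ?thesis .
  qed
  ultimately show ?thesis by simp
qed

theorem lemma4p4:
  fixes actX :: "'g::topological_group_add \<Rightarrow> 'x::metric_space \<Rightarrow> 'x"
    and actY :: "'g \<Rightarrow> 'y::metric_space \<Rightarrow> 'y"
    and mX :: "'x measure" and mY :: "'y measure" and \<mu> :: "'y measure"
    and K :: "'x \<Rightarrow> 'y \<Rightarrow> ereal" and C_K c :: real
  assumes "compact (UNIV :: 'x set)" and "compact (UNIV :: 'y set)"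
    and "compact (UNIV :: 'g set)"
    and "isom_trans_action actX" and "isom_trans_action actY"
    and "invariant_prob actX mX" and "invariant_prob actY mY"
    and "admissible_kernel actX actY mX K"
    and "\<forall>y. ereal_integral mX (\<lambda>x. K x y) = ereal C_K"
    and "prob_space \<mu>" and "sets \<mu> = sets borel"
    and "\<forall>x. ereal_integral \<mu> (\<lambda>y. K x y) = ereal c"
  shows "c = C_K"
proof -
  have pX: "prob_space mX" and sX: "sets mX = sets borel" using assms(6) unfolding invariant_prob_def by auto
  interpret mX: prob_space mX by (rule pX)
  interpret mu: prob_space \<mu> by (rule assms(10))
  interpret P: pair_sigma_finite mX \<mu> ..
  have Kb: "(\<lambda>(x, y). K x y) \<in> borel_measurable borel" using assms(8) unfolding admissible_kernel_def by blast
  obtain B :: real where B: "B \<ge> 0" "\<And>x y. K x y \<le> ereal B" using assms(8) unfolding admissible_kernel_def by blast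
  have sP: "sets (mX \<Otimes>\<^sub>M \<mu>) = sets (borel \<Otimes>\<^sub>M borel)"
    by (rule sets_pair_measure_cong[OF sX assms(11)])
  have spP: "space (mX \<Otimes>\<^sub>M \<mu>) = UNIV" by (simp add: space_pair_measure sets_eq_imp_space_eq[OF sX] sets_eq_imp_space_eq[OF assms(11)])
  have "measurable borel (borel :: ereal measure) \<subseteq> measurable (mX \<Otimes>\<^sub>M \<mu>) borel"
    by (rule measurable_mono) (use borel_sub[OF assms(1,2)] sP spP in auto)
  with Kb have KP: "(\<lambda>(x, y). K x y) \<in> borel_measurable (mX \<Otimes>\<^sub>M \<mu>)" by blast
  define Kp where "Kp x y = e2ennreal (K x y)" for x y
  define Km where "Km x y = e2ennreal (- K x y)" for x y
  have KpP: "(\<lambda>(x, y). Kp x y) \<in> borel_measurable (mX \<Otimes>\<^sub>M \<mu>)"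
    unfolding Kp_def using measurable_compose[OF KP measurable_e2ennreal] by (simp add: case_prod_beta')
  have KmP: "(\<lambda>(x, y). Km x y) \<in> borel_measurable (mX \<Otimes>\<^sub>M \<mu>)"
  proof -
    have "(\<lambda>z. - (case z of (x, y) \<Rightarrow> K x y)) \<in> borel_measurable (mX \<Otimes>\<^sub>M \<mu>)" using KP by measurable
    from measurable_compose[OF this measurable_e2ennreal] show ?thesis
      unfolding Km_def by (simp add: case_prod_beta')
  qed
  have KpP': "(\<lambda>(y, x). Kp x y) \<in> borel_measurable (\<mu> \<Otimes>\<^sub>M mX)"
    using KpP measurable_pair_swap_iff[of "\<lambda>(y, x). Kp x y" \<mu> mX borel] by (simp add: case_prod_beta')
  have KmP': "(\<lambda>(y, x). Km x y) \<in> borel_measurable (\<mu> \<Otimes>\<^sub>M mX)"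
    using KmP measurable_pair_swap_iff[of "\<lambda>(y, x). Km x y" \<mu> mX borel] by (simp add: case_prod_beta')
  have Kpb: "Kp x y \<le> ennreal B" for x y unfolding Kp_def
    using e2ennreal_mono[OF B(2)[of x y]] by simp
  have iB1: "(\<integral>\<^sup>+x. Kp x y \<partial>mX) \<le> ennreal B" for y
  proof -
    have "(\<integral>\<^sup>+x. Kp x y \<partial>mX) \<le> (\<integral>\<^sup>+x. ennreal B \<partial>mX)" by (rule nn_integral_mono) (rule Kpb)
    also have "\<dots> = ennreal B" by (simp add: mX.emeasure_space_1)
    finally show ?thesis .
  qed
  have iB2: "(\<integral>\<^sup>+y. Kp x y \<partial>\<mu>) \<le> ennreal B" for x
  proof -
    have "(\<integral>\<^sup>+y. Kp x y \<partial>\<mu>) \<le> (\<integral>\<^sup>+y. ennreal B \<partial>\<mu>)" by (rule nn_integral_mono) (rule Kpb)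
    also have "\<dots> = ennreal B" by (simp add: mu.emeasure_space_1)
    finally show ?thesis .
  qed
  have e1: "enn2ereal (\<integral>\<^sup>+y. (\<integral>\<^sup>+x. Kp x y \<partial>mX) \<partial>\<mu>) - enn2ereal (\<integral>\<^sup>+y. (\<integral>\<^sup>+x. Km x y \<partial>mX) \<partial>\<mu>) = ereal C_K"
  proof (rule key[OF assms(10), where B=B])
    show "(\<lambda>y. \<integral>\<^sup>+x. Kp x y \<partial>mX) \<in> borel_measurable \<mu>"
      using mX.borel_measurable_nn_integral[OF KpP'] .
    show "(\<lambda>y. \<integral>\<^sup>+x. Km x y \<partial>mX) \<in> borel_measurable \<mu>"
      using mX.borel_measurable_nn_integral[OF KmP'] .
    show "(\<integral>\<^sup>+x. Kp x y \<partial>mX) \<le> ennreal B" for y by (rule iB1)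
    show "enn2ereal (\<integral>\<^sup>+x. Kp x y \<partial>mX) - enn2ereal (\<integral>\<^sup>+x. Km x y \<partial>mX) = ereal C_K" for y
      using assms(9) unfolding ereal_integral_def Kp_def Km_def by blast
  qed
  have e2: "enn2ereal (\<integral>\<^sup>+x. (\<integral>\<^sup>+y. Kp x y \<partial>\<mu>) \<partial>mX) - enn2ereal (\<integral>\<^sup>+x. (\<integral>\<^sup>+y. Km x y \<partial>\<mu>) \<partial>mX) = ereal c"
  proof (rule key[OF pX, where B=B])
    show "(\<lambda>x. \<integral>\<^sup>+y. Kp x y \<partial>\<mu>) \<in> borel_measurable mX"
      using mu.borel_measurable_nn_integral[OF KpP] .
    show "(\<lambda>x. \<integral>\<^sup>+y. Km x y \<partial>\<mu>) \<in> borel_measurable mX"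
      using mu.borel_measurable_nn_integral[OF KmP] .
    show "(\<integral>\<^sup>+y. Kp x y \<partial>\<mu>) \<le> ennreal B" for x by (rule iB2)
    show "enn2ereal (\<integral>\<^sup>+y. Kp x y \<partial>\<mu>) - enn2ereal (\<integral>\<^sup>+y. Km x y \<partial>\<mu>) = ereal c" for x
      using assms(12) unfolding ereal_integral_def Kp_def Km_def by blast
  qed
  have f1: "(\<integral>\<^sup>+y. (\<integral>\<^sup>+x. Kp x y \<partial>mX) \<partial>\<mu>) = (\<integral>\<^sup>+x. (\<integral>\<^sup>+y. Kp x y \<partial>\<mu>) \<partial>mX)"
    by (rule P.Fubini'[OF KpP])
  have f2: "(\<integral>\<^sup>+y. (\<integral>\<^sup>+x. Km x y \<partial>mX) \<partial>\<mu>) = (\<integral>\<^sup>+x. (\<integral>\<^sup>+y. Km x y \<partial>\<mu>) \<partial>mX)"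
    by (rule P.Fubini'[OF KmP])
  from e1 e2 f1 f2 have "ereal C_K = ereal c" by simp
  then show ?thesis by simp
qed

end
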